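(* Let $X$ and $Y$ be Banach spaces and $\kappa$ an infinite cardinal. Then $X\oplus_\infty Y$ is $\mathrm{ASQ}_{<\kappa}$ if and only if $X$ or $Y$ is $\mathrm{ASQ}_{<\kappa}$. Likewise, $X\oplus_\infty Y$ is $\mathrm{SQ}_{<\kappa}$ if and only if $X$ or $Y$ is $\mathrm{SQ}_{<\kappa}$.
   Context: $X\oplus_\infty Y$ is $X\times Y$ with norm $\|(x,y)\|=\max\{\|x\|,\|y\|\}$. A Banach space $Z$ is $\mathrm{ASQ}_{<\kappa}$ if for every set $A\subset S_Z$ with $|A|<\kappa$ and every $\varepsilon>0$ there exists $y\in S_Z$ with $\|x\pm y\|\le 1+\varepsilon$ for all $x\in A$; $Z$ is $\mathrm{SQ}_{<\kappa}$ if for every such $A$ there exists $y\in S_Z$ with $\|x\pm y\|\le 1$ for all $x\in A$. *)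

theory Defs
  imports "HOL-Analysis.Analysis"
begin

text \<open>The unit sphere is the set of vectors of N-norm 1. Cardinals are
represented as in BNF_Cardinal_Order_Relation: kappa is a cardinal order relation,
and |A| < kappa is card_of A strictly less than kappa.\<close>

definition ASQ_lt_wrt :: "('v::real_vector \<Rightarrow> real) \<Rightarrow> 'c rel \<Rightarrow> bool" where
  "ASQ_lt_wrt N \<kappa> \<longleftrightarrow>
     (\<forall>A. A \<subseteq> {x. N x = 1} \<and> (card_of A, \<kappa>) \<in> ordLess \<longrightarrow>
        (\<forall>\<epsilon>>0. \<exists>y. N y = 1 \<and> (\<forall>x\<in>A. N (x + y) \<le> 1 + \<epsilon> \<and> N (x - y) \<le> 1 + \<epsilon>)))"

definition SQ_lt_wrt :: "('v::real_vector \<Rightarrow> real) \<Rightarrow> 'c rel \<Rightarrow> bool" where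
  "SQ_lt_wrt N \<kappa> \<longleftrightarrow>
     (\<forall>A. A \<subseteq> {x. N x = 1} \<and> (card_of A, \<kappa>) \<in> ordLess \<longrightarrow>
        (\<exists>y. N y = 1 \<and> (\<forall>x\<in>A. N (x + y) \<le> 1 \<and> N (x - y) \<le> 1)))"

abbreviation ASQ_lt :: "'c rel \<Rightarrow> 'v::real_normed_vector itself \<Rightarrow> bool" where
  "ASQ_lt \<kappa> _ \<equiv> ASQ_lt_wrt (norm :: 'v \<Rightarrow> real) \<kappa>"

abbreviation SQ_lt :: "'c rel \<Rightarrow> 'v::real_normed_vector itself \<Rightarrow> bool" where
  "SQ_lt \<kappa> _ \<equiv> SQ_lt_wrt (norm :: 'v \<Rightarrow> real) \<kappa>"

definition linf_norm :: "('a::real_normed_vector \<times> 'b::real_normed_vector) \<Rightarrow> real" where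
  "linf_norm z = max (norm (fst z)) (norm (snd z))"

end

theory Submission
  imports Defs
begin

definition Qp :: "('v::real_vector \<Rightarrow> real) \<Rightarrow> 'c rel \<Rightarrow> real \<Rightarrow> bool" where
  "Qp N \<kappa> e \<longleftrightarrow> (\<forall>A. A \<subseteq> {x. N x = 1} \<and> (card_of A, \<kappa>) \<in> ordLess \<longrightarrow>
        (\<exists>y. N y = 1 \<and> (\<forall>x\<in>A. N (x + y) \<le> 1 + e \<and> N (x - y) \<le> 1 + e)))"

lemma ASQ_Qp: "ASQ_lt_wrt N \<kappa> \<longleftrightarrow> (\<forall>e>0. Qp N \<kappa> e)"
  unfolding ASQ_lt_wrt_def Qp_def by blast

lemma SQ_Qp: "SQ_lt_wrt N \<kappa> \<longleftrightarrow> Qp N \<kappa> 0"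
  unfolding SQ_lt_wrt_def Qp_def by simp

lemma conv:
  fixes u y :: "'a::real_normed_vector"
  assumes "norm (u + y) \<le> c" "norm y \<le> 1" "1 \<le> c" "0 \<le> t" "t \<le> 1"
  shows "norm (t *\<^sub>R u + y) \<le> c"
proof -
  have eq: "t *\<^sub>R u + y = t *\<^sub>R (u + y) + (1 - t) *\<^sub>R y" by (simp add: algebra_simps)
  have "norm (t *\<^sub>R u + y) \<le> norm (t *\<^sub>R (u + y)) + norm ((1 - t) *\<^sub>R y)"
    unfolding eq by (rule norm_triangle_ineq)
  also have "\<dots> = t * norm (u + y) + (1 - t) * norm y" using assms by simp
  also have "\<dots> \<le> t * c + (1 - t) * 1"
    using assms by (intro add_mono mult_left_mono) auto
  also have "\<dots> \<le> c"
  proof -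
    have "0 \<le> (1 - t) * (c - 1)" using assms by simp
    then show ?thesis by (simp add: algebra_simps)
  qed
  finally show ?thesis .
qed

lemma ball_pm:
  fixes a y :: "'a::real_normed_vector"
  assumes "norm a \<le> 1" "norm y = 1" "0 \<le> e"
    and H: "a \<noteq> 0 \<Longrightarrow> norm (sgn a + y) \<le> 1 + e \<and> norm (sgn a - y) \<le> 1 + e"
  shows "norm (a + y) \<le> 1 + e \<and> norm (a - y) \<le> 1 + e"
proof (cases "a = 0")
  case True then show ?thesis using assms by simp
next
  case False
  have a: "a = norm a *\<^sub>R sgn a" by (simp add: sgn_div_norm False)
  have "norm (norm a *\<^sub>R sgn a + y) \<le> 1 + e"
    using H[OF False] assms by (intro conv) auto
  moreover have "norm (norm a *\<^sub>R sgn a + (- y)) \<le> 1 + e"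
    using H[OF False] assms by (intro conv) auto
  ultimately show ?thesis using a by (metis diff_conv_add_uminus)
qed

lemma up1:
  assumes H: "Qp (norm :: 'a::real_normed_vector \<Rightarrow> real) \<kappa> e" and e: "0 \<le> e"
  shows "Qp (linf_norm :: 'a \<times> 'b::real_normed_vector \<Rightarrow> real) \<kappa> e"
  unfolding Qp_def
proof (intro allI impI)
  fix A :: "('a \<times> 'b) set"
  assume A: "A \<subseteq> {x. linf_norm x = 1} \<and> (card_of A, \<kappa>) \<in> ordLess"
  define B where "B = (\<lambda>x. sgn (fst x)) ` {x\<in>A. fst x \<noteq> 0}"
  have B1: "B \<subseteq> {x. norm x = 1}" by (auto simp: B_def norm_sgn)
  have "(card_of B, card_of {x\<in>A. fst x \<noteq> 0}) \<in> ordLeq" unfolding B_def by (rule card_of_image)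
  moreover have "(card_of {x\<in>A. fst x \<noteq> 0}, card_of A) \<in> ordLeq" by (rule card_of_mono1) auto
  ultimately have "(card_of B, \<kappa>) \<in> ordLess" using A ordLeq_transitive ordLeq_ordLess_trans by blast
  then obtain y0 where y0: "norm y0 = 1" "\<forall>u\<in>B. norm (u + y0) \<le> 1 + e \<and> norm (u - y0) \<le> 1 + e"
    using H B1 unfolding Qp_def by blast
  show "\<exists>y. linf_norm y = 1 \<and> (\<forall>x\<in>A. linf_norm (x + y) \<le> 1 + e \<and> linf_norm (x - y) \<le> 1 + e)"
  proof (intro exI[of _ "(y0, 0)"] conjI ballI)
    show "linf_norm (y0, 0::'b) = 1" using y0 by (simp add: linf_norm_def)
    fix x assume x: "x \<in> A"
    then have nx: "max (norm (fst x)) (norm (snd x)) = 1" using A by (auto simp: linf_norm_def)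
    have "norm (fst x + y0) \<le> 1 + e \<and> norm (fst x - y0) \<le> 1 + e"
    proof (rule ball_pm)
      show "norm (fst x) \<le> 1" using nx by linarith
      assume "fst x \<noteq> 0"
      then have "sgn (fst x) \<in> B" using x by (auto simp: B_def)
      then show "norm (sgn (fst x) + y0) \<le> 1 + e \<and> norm (sgn (fst x) - y0) \<le> 1 + e" using y0 by blast
    qed (use y0 e in auto)
    moreover have "norm (snd x) \<le> 1 + e" using nx e by linarith
    ultimately show "linf_norm (x + (y0, 0)) \<le> 1 + e" "linf_norm (x - (y0, 0)) \<le> 1 + e"
      by (auto simp: linf_norm_def)
  qed
qed

lemma up2:
  assumes H: "Qp (norm :: 'b::real_normed_vector \<Rightarrow> real) \<kappa> e" and e: "0 \<le> e"
  shows "Qp (linf_norm :: 'a::real_normed_vector \<times> 'b \<Rightarrow> real) \<kappa> e"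
  unfolding Qp_def
proof (intro allI impI)
  fix A :: "('a \<times> 'b) set"
  assume A: "A \<subseteq> {x. linf_norm x = 1} \<and> (card_of A, \<kappa>) \<in> ordLess"
  define B where "B = (\<lambda>x. sgn (snd x)) ` {x\<in>A. snd x \<noteq> 0}"
  have B1: "B \<subseteq> {x. norm x = 1}" by (auto simp: B_def norm_sgn)
  have "(card_of B, card_of {x\<in>A. snd x \<noteq> 0}) \<in> ordLeq" unfolding B_def by (rule card_of_image)
  moreover have "(card_of {x\<in>A. snd x \<noteq> 0}, card_of A) \<in> ordLeq" by (rule card_of_mono1) auto
  ultimately have "(card_of B, \<kappa>) \<in> ordLess" using A ordLeq_transitive ordLeq_ordLess_trans by blast
  then obtain y0 where y0: "norm y0 = 1" "\<forall>u\<in>B. norm (u + y0) \<le> 1 + e \<and> norm (u - y0) \<le> 1 + e"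
    using H B1 unfolding Qp_def by blast
  show "\<exists>y. linf_norm y = 1 \<and> (\<forall>x\<in>A. linf_norm (x + y) \<le> 1 + e \<and> linf_norm (x - y) \<le> 1 + e)"
  proof (intro exI[of _ "(0, y0)"] conjI ballI)
    show "linf_norm (0::'a, y0) = 1" using y0 by (simp add: linf_norm_def)
    fix x assume x: "x \<in> A"
    then have nx: "max (norm (fst x)) (norm (snd x)) = 1" using A by (auto simp: linf_norm_def)
    have "norm (snd x + y0) \<le> 1 + e \<and> norm (snd x - y0) \<le> 1 + e"
    proof (rule ball_pm)
      show "norm (snd x) \<le> 1" using nx by linarith
      assume "snd x \<noteq> 0"
      then have "sgn (snd x) \<in> B" using x by (auto simp: B_def)
      then show "norm (sgn (snd x) + y0) \<le> 1 + e \<and> norm (sgn (snd x) - y0) \<le> 1 + e" using y0 by blast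
    qed (use y0 e in auto)
    moreover have "norm (fst x) \<le> 1 + e" using nx e by linarith
    ultimately show "linf_norm (x + (0, y0)) \<le> 1 + e" "linf_norm (x - (0, y0)) \<le> 1 + e"
      by (auto simp: linf_norm_def)
  qed
qed

lemma down:
  fixes \<kappa> :: "'c rel"
  assumes K: "Card_order \<kappa>" "\<not> finite (Field \<kappa>)"
    and H1: "\<not> Qp (norm :: 'a::real_normed_vector \<Rightarrow> real) \<kappa> e1"
    and H2: "\<not> Qp (norm :: 'b::real_normed_vector \<Rightarrow> real) \<kappa> e2"
  shows "\<not> Qp (linf_norm :: 'a \<times> 'b \<Rightarrow> real) \<kappa> (min e1 e2)"
proof
  assume Q: "Qp (linf_norm :: 'a \<times> 'b \<Rightarrow> real) \<kappa> (min e1 e2)"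
  obtain A1 :: "'a set" where A1: "A1 \<subseteq> {x. norm x = 1}" "(card_of A1, \<kappa>) \<in> ordLess"
    and F1: "\<And>y. norm y = 1 \<Longrightarrow> \<exists>x\<in>A1. \<not> (norm (x + y) \<le> 1 + e1 \<and> norm (x - y) \<le> 1 + e1)"
    using H1 unfolding Qp_def by blast
  obtain A2 :: "'b set" where A2: "A2 \<subseteq> {x. norm x = 1}" "(card_of A2, \<kappa>) \<in> ordLess"
    and F2: "\<And>y. norm y = 1 \<Longrightarrow> \<exists>x\<in>A2. \<not> (norm (x + y) \<le> 1 + e2 \<and> norm (x - y) \<le> 1 + e2)"
    using H2 unfolding Qp_def by blast
  define A where "A = (\<lambda>a. (a, 0::'b)) ` A1 \<union> (\<lambda>b. (0::'a, b)) ` A2"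
  have S: "A \<subseteq> {x. linf_norm x = 1}" using A1 A2 by (auto simp: A_def linf_norm_def)
  have c1: "(card_of ((\<lambda>a. (a, 0::'b)) ` A1), \<kappa>) \<in> ordLess"
    using card_of_image ordLeq_ordLess_trans A1(2) by blast
  have c2: "(card_of ((\<lambda>b. (0::'a, b)) ` A2), \<kappa>) \<in> ordLess"
    using card_of_image ordLeq_ordLess_trans A2(2) by blast
  have "(card_of A, \<kappa>) \<in> ordLess" unfolding A_def
    using card_of_Un_ordLess_infinite_Field[OF K(2) K(1) c1 c2] .
  then obtain y :: "'a \<times> 'b" where y: "linf_norm y = 1"
    "\<forall>x\<in>A. linf_norm (x + y) \<le> 1 + min e1 e2 \<and> linf_norm (x - y) \<le> 1 + min e1 e2"
    using Q S unfolding Qp_def by blast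
  have "norm (fst y) = 1 \<or> norm (snd y) = 1" using y(1) unfolding linf_norm_def by linarith
  then show False
  proof
    assume "norm (fst y) = 1"
    then obtain a where a: "a \<in> A1" "\<not> (norm (a + fst y) \<le> 1 + e1 \<and> norm (a - fst y) \<le> 1 + e1)"
      using F1 by blast
    have "(a, 0) \<in> A" using a by (auto simp: A_def)
    then have "linf_norm ((a, 0) + y) \<le> 1 + min e1 e2 \<and> linf_norm ((a, 0) - y) \<le> 1 + min e1 e2"
      using y by blast
    then show False using a by (auto simp: linf_norm_def)
  next
    assume "norm (snd y) = 1"
    then obtain b where b: "b \<in> A2" "\<not> (norm (b + snd y) \<le> 1 + e2 \<and> norm (b - snd y) \<le> 1 + e2)"
      using F2 by blast
    have "(0, b) \<in> A" using b by (auto simp: A_def)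
    then have "linf_norm ((0, b) + y) \<le> 1 + min e1 e2 \<and> linf_norm ((0, b) - y) \<le> 1 + min e1 e2"
      using y by blast
    then show False using b by (auto simp: linf_norm_def)
  qed
qed

theorem corollary4p2:
  fixes \<kappa> :: "'c rel"
  assumes "Card_order \<kappa>" and "\<not> finite (Field \<kappa>)"
  shows "(ASQ_lt_wrt (linf_norm :: 'a::banach \<times> 'b::banach \<Rightarrow> real) \<kappa>
            \<longleftrightarrow> ASQ_lt \<kappa> TYPE('a) \<or> ASQ_lt \<kappa> TYPE('b))
       \<and> (SQ_lt_wrt (linf_norm :: 'a \<times> 'b \<Rightarrow> real) \<kappa>
            \<longleftrightarrow> SQ_lt \<kappa> TYPE('a) \<or> SQ_lt \<kappa> TYPE('b))"
proof (intro conjI iffI)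
  assume L: "ASQ_lt_wrt (linf_norm :: 'a \<times> 'b \<Rightarrow> real) \<kappa>"
  show "ASQ_lt \<kappa> TYPE('a) \<or> ASQ_lt \<kappa> TYPE('b)"
  proof (rule ccontr)
    assume "\<not> ?thesis"
    then obtain e1 e2 where "e1 > 0" "e2 > 0" "\<not> Qp (norm :: 'a \<Rightarrow> real) \<kappa> e1"
      "\<not> Qp (norm :: 'b \<Rightarrow> real) \<kappa> e2" unfolding ASQ_Qp by blast
    with down[OF assms] L show False unfolding ASQ_Qp
      by (metis min_less_iff_conj)
  qed
next
  assume "ASQ_lt \<kappa> TYPE('a) \<or> ASQ_lt \<kappa> TYPE('b)"
  then show "ASQ_lt_wrt (linf_norm :: 'a \<times> 'b \<Rightarrow> real) \<kappa>"
    unfolding ASQ_Qp using up1 up2 less_imp_le by blast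
next
  assume L: "SQ_lt_wrt (linf_norm :: 'a \<times> 'b \<Rightarrow> real) \<kappa>"
  show "SQ_lt \<kappa> TYPE('a) \<or> SQ_lt \<kappa> TYPE('b)"
    using down[OF assms, of 0 0] L unfolding SQ_Qp by auto
next
  assume "SQ_lt \<kappa> TYPE('a) \<or> SQ_lt \<kappa> TYPE('b)"
  then show "SQ_lt_wrt (linf_norm :: 'a \<times> 'b \<Rightarrow> real) \<kappa>"
    unfolding SQ_Qp using up1 up2 by auto
qed

end
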